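(* Let $d\in\mathbb{N}$, $\ell\in\mathbb{N}_0$, let $k$ be a stationary product kernel on $\mathbb{R}^d$, and let $K_{\mathcal{G}_{\ell,d}}$ be the kernel matrix of $k$ on the $d$-dimensional sparse grid $\mathcal{G}_{\ell,d}$ of resolution $\ell$. For any vector $\mathbf v\in\mathbb{R}^{|\mathcal{G}_{\ell,d}|}$, the Sparse Grid Kernel-MVM Algorithm (described in the context) computes $K_{\mathcal{G}_{\ell,d}}\mathbf v$, and it does so in $O(\ell^{d}2^{\ell})$ time.
   Context: Grids. For $l\in\mathbb{N}_0$ let $\Omega_l=\{i/2^{l+1} : 1\le i\le 2^{l+1},\ i \text{ odd}\}\subset[0,1]$ (so $|\Omega_l|=2^l$ and $\Omega_l\cap\Omega_{l'}=\emptyset$ for $l\neq l'$). For $\mathbf l\in\mathbb{N}_0^d$ let $\Omega_{\mathbf l}=\Omega_{l_1}\times\cdots\times\Omega_{l_d}$. The sparse grid is $\mathcal{G}_{\ell,d}=\bigcup_{\mathbf l\in\mathbb{N}_0^d,\ \|\mathbf l\|_1\le\ell}\Omega_{\mathbf l}\subset[0,1]^d$. One has $\mathcal{G}_{\ell',d}\subseteq\mathcal{G}_{\ell,d}$ for $\ell'\le\ell$, $\mathcal{G}_{\ell,1}=\bigcup_{i=0}^{\ell}\Omega_i$, and for $d\ge2$, $\mathcal{G}_{\ell,d}=\bigcup_{i=0}^{\ell}\Omega_i\times\mathcal{G}_{\ell-i,d-1}$ (a disjoint union). Kernel. A stationary product kernel is $k(\mathbf x,\mathbf x')=\prod_{j=1}^d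 k_j(x_j-x_j')$ for one-dimensional functions $k_j$. For a finite set $U$, $K_U=[k(\mathbf x,\mathbf x')]_{\mathbf x,\mathbf x'\in U}$ with rows/columns indexed by $U$ in a fixed order. In dimension 1, $K_{\mathcal{G}_{\ell,1}}$ (equally spaced points, stationary kernel) is Toeplitz and is multiplied by a vector using fast (FFT-based) Toeplitz multiplication in $O(\ell2^\ell)$ time. Selection matrices. For finite $U\subseteq V$, $\mathcal S_{U,V}\in\{0,1\}^{|U|\times|V|}$ has entry $(a,b)$ equal to $1$ iff the $a$-th element of $U$ equals the $b$-th element of $V$, and $\mathcal S_{V,U}=\mathcal S_{U,V}^T$ (selecting entries, resp. inserting zeros). Algorithm $\mathbf{mvm}(K_{\mathcal{G}_{\ell,d}},\mathbf v)$: For each $i=0,\dots,\ell$ let $V_i$ be the $|\Omega_i|\times|\mathcal{G}_{\ell-i,d-1}|$ matrix obtained by reshaping the entries of $\mathbf v$ indexed by $\Omega_i\times\mathcal{G}_{\ell-i,d-1}$ (row index in $\Omega_i$, column index in $\mathcal{G}_{\ell-i,d-1}$). If $d=1$, return $K_{\mathcal{G}_{\ell,1}}\mathbf v$ (Toeplitz multiplication). Otherwise: (pre-computation) for $i=0,\dots,\ell$ set $\overline A_i=K_{\mathcal{G}_{i,1}}\mathcal S_{\mathcal{G}_{i,1},\Omega_i}V_i$ and $\overline B_i^T=\mathbf{mvm}(K_{\mathcal{G}_{\ell-i,d-1}},V_i^T)$ (recursive multiplication applied to each column); (main loop) for $i=0,\dots,\ell$ set $A_i^T=\mathbf{mvm}\big(K_{\mathcal{G}_{\ell-i,d-1}},\big(\sum_{j>i}\mathcal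 S_{\Omega_i,\mathcal{G}_{j,1}}\overline A_j\,\mathcal S_{\mathcal{G}_{\ell-j,d-1},\mathcal{G}_{\ell-i,d-1}}\big)^T\big)$, $B_i=\mathcal S_{\Omega_i,\mathcal{G}_{i,1}}K_{\mathcal{G}_{i,1}}\big(\sum_{j\le i}\mathcal S_{\mathcal{G}_{i,1},\Omega_j}\overline B_j\,\mathcal S_{\mathcal{G}_{\ell-j,d-1},\mathcal{G}_{\ell-i,d-1}}\big)$, and $\mathbf u_i=\mathrm{vec}(A_i)+\mathrm{vec}(B_i)$; the output $\mathbf u$ is the vector whose entries indexed by $\Omega_i\times\mathcal{G}_{\ell-i,d-1}$ are $\mathbf u_i$ (with vectorization consistent with the reshaping used for $V_i$). *)

theory Defs
  imports Complex_Main
begin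

definition Omega :: "nat \<Rightarrow> real set" where
  "Omega l = {real i / 2 ^ (l + 1) | i. 1 \<le> i \<and> i \<le> 2 ^ (l + 1) \<and> odd i}"

definition sparse_grid :: "nat \<Rightarrow> nat \<Rightarrow> real list set" where
  "sparse_grid ell d = {x. length x = d \<and>
     (\<exists>ls :: nat list. length ls = d \<and> sum_list ls \<le> ell \<and> (\<forall>j<d. x ! j \<in> Omega (ls ! j)))}"

definition grid1 :: "nat \<Rightarrow> real set" where
  "grid1 ell = (\<Union>i\<le>ell. Omega i)"

definition prod_kernel :: "(nat \<Rightarrow> real \<Rightarrow> real) \<Rightarrow> real list \<Rightarrow> real list \<Rightarrow> real" where
  "prod_kernel kf x y = (\<Prod>j<length x. kf j (x ! j - y ! j))"

definition kernel_mvm :: "(nat \<Rightarrow> real \<Rightarrow> real) \<Rightarrow> real list set \<Rightarrow> (real list \<Rightarrow> real) \<Rightarrow> real list \<Rightarrow> real" where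
  "kernel_mvm kf U v x = (\<Sum>y\<in>U. prod_kernel kf x y * v y)"

text \<open>One-dimensional Toeplitz multiplication K_{G_{m,1}} w (black box) and its cost
  (FFT-based, O(m 2^m)).\<close>
definition toeplitz_mvm :: "(real \<Rightarrow> real) \<Rightarrow> nat \<Rightarrow> (real \<Rightarrow> real) \<Rightarrow> real \<Rightarrow> real" where
  "toeplitz_mvm k m w t = (\<Sum>s\<in>grid1 m. k (t - s) * w s)"

definition toeplitz_cost :: "nat \<Rightarrow> nat" where
  "toeplitz_cost m = (m + 1) * 2 ^ (m + 1)"

text \<open>Matrices V_i etc. are represented as functions
  of (row point, column point); selection matrices become restriction / zero-extension.\<close>
definition sg_step ::
  "(nat \<Rightarrow> (nat \<Rightarrow> real \<Rightarrow> real) \<Rightarrow> (real list \<Rightarrow> real) \<Rightarrow> (real list \<Rightarrow> real) \<times> nat)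
   \<Rightarrow> nat \<Rightarrow> nat \<Rightarrow> (nat \<Rightarrow> real \<Rightarrow> real) \<Rightarrow> (real list \<Rightarrow> real) \<Rightarrow> (real list \<Rightarrow> real) \<times> nat" where
  "sg_step rec d' ell kf v = (let
     kf' = (\<lambda>j. kf (Suc j));
     G = (\<lambda>m. sparse_grid m d');
     \<comment> \<open>precomputation: Abar_i = K_{G_{i,1}} S V_i, rows t in G_{i,1}, columns y\<close>
     Abar = (\<lambda>j t y. toeplitz_mvm (kf 0) j (\<lambda>s. if s \<in> Omega j then v (s # y) else 0) t);
     \<comment> \<open>precomputation: Bbar_i^T = mvm(K_{G_{ell-i,d-1}}, V_i^T), row x1 in Omega_i\<close>
     Bbar = (\<lambda>j x1. fst (rec (ell - j) kf' (\<lambda>y. v (x1 # y))));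
     M = (\<lambda>i x1 y. \<Sum>j\<in>{i<..ell}. if y \<in> G (ell - j) then Abar j x1 y else 0);
     A = (\<lambda>i x1. fst (rec (ell - i) kf' (M i x1)));
     N = (\<lambda>i t y. \<Sum>j\<in>{..i}. if t \<in> Omega j then Bbar j t y else 0);
     B = (\<lambda>i x1 y. toeplitz_mvm (kf 0) i (\<lambda>t. N i t y) x1);
     u = (\<lambda>x. \<Sum>i\<in>{..ell}. if hd x \<in> Omega i then A i (hd x) (tl x) + B i (hd x) (tl x) else 0);
     cost =
       (\<Sum>i\<le>ell. card (G (ell - i)) * toeplitz_cost i)
     + (\<Sum>i\<le>ell. \<Sum>x1\<in>Omega i. snd (rec (ell - i) kf' (\<lambda>y. v (x1 # y))))
     + (\<Sum>i\<le>ell. \<Sum>j\<in>{i<..ell}. card (Omega i) * card (G (ell - j)))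
     + (\<Sum>i\<le>ell. \<Sum>x1\<in>Omega i. snd (rec (ell - i) kf' (M i x1)))
     + (\<Sum>i\<le>ell. \<Sum>j\<le>i. card (Omega j) * card (G (ell - i)))
     + (\<Sum>i\<le>ell. card (G (ell - i)) * toeplitz_cost i)
     + (\<Sum>i\<le>ell. card (Omega i) * card (G (ell - i)))
   in (u, cost))"

primrec sg_mvm :: "nat \<Rightarrow> nat \<Rightarrow> (nat \<Rightarrow> real \<Rightarrow> real) \<Rightarrow> (real list \<Rightarrow> real) \<Rightarrow> (real list \<Rightarrow> real) \<times> nat" where
  "sg_mvm 0 ell kf v = (v, 0)"
| "sg_mvm (Suc d') ell kf v =
     (if d' = 0 then ((\<lambda>x. toeplitz_mvm (kf 0) ell (\<lambda>s. v [s]) (hd x)), toeplitz_cost ell)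
      else sg_step (sg_mvm d') d' ell kf v)"

end

theory Submission imports Defs begin

lemma Omega_sub: "Omega l \<subseteq> (\<lambda>k::nat. real (2*k+1) / 2^(l+1)) ` {..<2^l}"
proof
  fix x assume "x \<in> Omega l"
  then obtain i where i: "x = real i / 2^(l+1)" "1 \<le> i" "i \<le> 2^(l+1)" "odd i"
    unfolding Omega_def by auto
  then obtain k where k: "i = 2*k+1" by (meson oddE)
  have "k < 2^l" using i(3) i(4) k by (auto simp: power_Suc)
  thus "x \<in> (\<lambda>k::nat. real (2*k+1) / 2^(l+1)) ` {..<2^l}" using i k by auto
qed

lemma finite_Omega[simp]: "finite (Omega l)"
  using Omega_sub finite_subset by blast

lemma card_Omega: "card (Omega l) \<le> 2^l"
proof -
  have "card (Omega l) \<le> card ((\<lambda>k::nat. real (2*k+1) / 2^(l+1)) ` {..<2^l})"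
    by (rule card_mono[OF _ Omega_sub]) auto
  also have "\<dots> \<le> card {..<(2::nat)^l}" by (rule card_image_le) auto
  finally show ?thesis by simp
qed

lemma Omega_disj: assumes "x \<in> Omega i" "x \<in> Omega j" shows "i = j"
proof (rule ccontr)
  assume ne: "i \<noteq> j"
  { fix i j :: nat assume lt: "i < j" and xi: "x \<in> Omega i" and xj: "x \<in> Omega j"
    obtain a where a: "x = real a / 2^(i+1)" "odd a" using xi unfolding Omega_def by auto
    obtain b where b: "x = real b / 2^(j+1)" "odd b" using xj unfolding Omega_def by auto
    have "real a / 2^(i+1) = real b / 2^(j+1)" using a b by simp
    hence "real a * 2^(j+1) = real b * 2^(i+1)" by (simp add: field_simps)
    hence "real (a * 2^(j+1)) = real (b * 2^(i+1))" by simp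
    hence e: "a * 2^(j+1) = b * 2^(i+1)" by (simp only: of_nat_eq_iff)
    have "(2::nat)^(j+1) = 2^(i+1) * 2^(j-i)" using lt by (simp add: power_add[symmetric])
    hence "a * 2^(j-i) = b" using e by simp
    moreover have "even (a * 2^(j-i))" using lt by simp
    ultimately have "even b" by simp
    hence False using b by simp }
  thus False using ne assms by (metis linorder_neqE_nat)
qed

lemma sparse_grid_0: "sparse_grid ell 0 = {[]}"
  unfolding sparse_grid_def by auto

lemma Cons_in_sg: "(a # y \<in> sparse_grid ell (Suc d)) \<longleftrightarrow> (\<exists>i\<le>ell. a \<in> Omega i \<and> y \<in> sparse_grid (ell - i) d)"
proof
  assume "a # y \<in> sparse_grid ell (Suc d)"
  then obtain ls where ls: "length y = d" "length ls = Suc d" "sum_list ls \<le> ell" "\<forall>j<Suc d. (a#y) ! j \<in> Omega (ls ! j)"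
    unfolding sparse_grid_def by auto
  then obtain l ls' where l: "ls = l # ls'" by (cases ls) auto
  have "a \<in> Omega l" using ls(4) l by (metis nth_Cons_0 zero_less_Suc)
  moreover have "y \<in> sparse_grid (ell - l) d" unfolding sparse_grid_def
    using ls l by (auto intro!: exI[of _ ls'])
  moreover have "l \<le> ell" using ls(3) l by simp
  ultimately show "\<exists>i\<le>ell. a \<in> Omega i \<and> y \<in> sparse_grid (ell - i) d" by blast
next
  assume "\<exists>i\<le>ell. a \<in> Omega i \<and> y \<in> sparse_grid (ell - i) d"
  then obtain i ls' where "i \<le> ell" "a \<in> Omega i" "length y = d" "length ls' = d" "sum_list ls' \<le> ell - i"
     "\<forall>j<d. y ! j \<in> Omega (ls' ! j)" unfolding sparse_grid_def by auto
  thus "a # y \<in> sparse_grid ell (Suc d)" unfolding sparse_grid_def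
    by (auto intro!: exI[of _ "i # ls'"] simp: nth_Cons less_Suc_eq_0_disj)
qed

lemma sparse_grid_Suc: "sparse_grid ell (Suc d) = (\<Union>i\<le>ell. (\<lambda>(a,y). a#y) ` (Omega i \<times> sparse_grid (ell-i) d))"
proof -
  have *: "x \<in> sparse_grid ell (Suc d) \<Longrightarrow> \<exists>a y. x = a # y" for x
    unfolding sparse_grid_def by (cases x) auto
  show ?thesis
  proof (intro set_eqI iffI)
    fix x assume x: "x \<in> sparse_grid ell (Suc d)"
    then obtain a y where xy: "x = a # y" using * by blast
    then obtain i where "i \<le> ell" "a \<in> Omega i" "y \<in> sparse_grid (ell - i) d"
      using x Cons_in_sg by blast
    thus "x \<in> (\<Union>i\<le>ell. (\<lambda>(a,y). a#y) ` (Omega i \<times> sparse_grid (ell-i) d))"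
      using xy by blast
  next
    fix x assume "x \<in> (\<Union>i\<le>ell. (\<lambda>(a,y). a#y) ` (Omega i \<times> sparse_grid (ell-i) d))"
    then obtain i p where ip: "i \<le> ell" "p \<in> Omega i \<times> sparse_grid (ell - i) d" "x = (\<lambda>(a,y). a#y) p"
      by blast
    obtain a y where "p = (a, y)" by (cases p)
    hence "i \<le> ell" "a \<in> Omega i" "y \<in> sparse_grid (ell - i) d" "x = a # y" using ip by auto
    thus "x \<in> sparse_grid ell (Suc d)" using Cons_in_sg by blast
  qed
qed

lemma finite_sg[simp]: "finite (sparse_grid ell d)"
  by (induction d arbitrary: ell) (auto simp: sparse_grid_0 sparse_grid_Suc)

lemma sg_mono: "m \<le> n \<Longrightarrow> sparse_grid m d \<subseteq> sparse_grid n d"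
  unfolding sparse_grid_def by fastforce

lemma sum_sg_Suc: "sum f (sparse_grid ell (Suc d)) = (\<Sum>j\<le>ell. \<Sum>s\<in>Omega j. \<Sum>z\<in>sparse_grid (ell-j) d. f (s#z))"
proof -
  have "sum f (sparse_grid ell (Suc d)) = (\<Sum>j\<le>ell. sum f ((\<lambda>(a,y). a#y) ` (Omega j \<times> sparse_grid (ell-j) d)))"
    unfolding sparse_grid_Suc
    by (rule sum.UNION_disjoint) (auto dest: Omega_disj)
  also have "\<dots> = (\<Sum>j\<le>ell. sum (\<lambda>(a,y). f (a#y)) (Omega j \<times> sparse_grid (ell-j) d))"
    by (rule sum.cong[OF refl], subst sum.reindex) (auto simp: inj_on_def case_prod_beta)
  also have "\<dots> = (\<Sum>j\<le>ell. \<Sum>s\<in>Omega j. \<Sum>z\<in>sparse_grid (ell-j) d. f (s#z))"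
    by (simp add: sum.cartesian_product)
  finally show ?thesis .
qed

lemma card_sg: "card (sparse_grid m (Suc e)) \<le> 2 * (m+1)^e * 2^m"
proof (induction e arbitrary: m)
  case 0
  have "card (sparse_grid m (Suc 0)) \<le> (\<Sum>j\<le>m. \<Sum>s\<in>Omega j. \<Sum>z\<in>sparse_grid (m-j) 0. 1::nat)"
    using sum_sg_Suc[of "\<lambda>_. 1::nat" m 0] by simp
  also have "\<dots> \<le> (\<Sum>j\<le>m. 2^j)" by (intro sum_mono) (simp add: sparse_grid_0 card_Omega)
  also have "\<dots> = 2^(m+1) - 1" by (induction m) auto
  finally show ?case by simp
next
  case (Suc e)
  have "card (sparse_grid m (Suc (Suc e))) = (\<Sum>j\<le>m. \<Sum>s\<in>Omega j. \<Sum>z\<in>sparse_grid (m-j) (Suc e). 1::nat)"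
    using sum_sg_Suc[of "\<lambda>_. 1::nat" m "Suc e"] by simp
  also have "\<dots> = (\<Sum>j\<le>m. card (Omega j) * card (sparse_grid (m-j) (Suc e)))" by simp
  also have "\<dots> \<le> (\<Sum>j\<le>m. 2^j * (2 * (m-j+1)^e * 2^(m-j)))"
    by (intro sum_mono mult_mono card_Omega Suc) auto
  also have "\<dots> \<le> (\<Sum>j\<le>m. 2 * (m+1)^e * 2^m)"
  proof (intro sum_mono)
    fix j assume "j \<in> {..m}"
    hence p2: "(2::nat)^j * 2^(m-j) = 2^m" by (simp add: power_add[symmetric])
    have pm: "(m-j+1)^e \<le> (m+1)^e" by (intro power_mono) auto
    have "(2::nat)^j * (2 * (m-j+1)^e * 2^(m-j)) = 2 * (m-j+1)^e * (2^j * 2^(m-j))"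
      by (simp only: ac_simps)
    also have "\<dots> = 2 * (m-j+1)^e * 2^m" by (simp only: p2)
    also have "\<dots> \<le> 2 * (m+1)^e * 2^m" using pm by simp
    finally show "2^j * (2 * (m-j+1)^e * 2^(m-j)) \<le> 2 * (m+1)^e * (2::nat)^m" .
  qed
  also have "\<dots> = 2 * (m+1)^(Suc e) * 2^m" by (simp add: algebra_simps)
  finally show ?case .
qed


lemma sba: "(\<And>i. i \<in> A \<Longrightarrow> f i \<le> K) \<Longrightarrow> sum f A \<le> card A * (K::nat)"
  using sum_bounded_above[of A f K] by simp

lemma conv1: "card {..(ell::nat)} * (k * ((ell+1) * Z)) = k * ((ell+1)*((ell+1)*Z))"
  by (simp only: card_atMost Suc_eq_plus1 ac_simps)
lemma conv2: "card {..(ell::nat)} * ((ell+1) * (k * Z)) = k * ((ell+1)*((ell+1)*Z))"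
  by (simp only: card_atMost Suc_eq_plus1 ac_simps)
lemma conv3: "((ell::nat)+1) * ((ell+1) * (k * Z)) = k * ((ell+1)*((ell+1)*Z))"
  by (simp only: ac_simps)

lemma pow2_le: "a + b \<le> n \<Longrightarrow> (2::nat)^a * 2^b \<le> 2^n"
  by (simp add: power_add[symmetric])

lemma cardG: "card (sparse_grid (ell - j) (Suc e)) \<le> 2*(ell+1)^e*2^(ell-j)"
proof -
  have "(ell - j + 1)^e \<le> (ell+1)^e" by (intro power_mono) auto
  thus ?thesis using card_sg[of "ell-j" e] by (meson le_trans mult_le_mono1 mult_le_mono2)
qed

lemma snd_sg_step: "snd (sg_step rec d' ell kf v) =
       (\<Sum>i\<le>ell. card (sparse_grid (ell - i) d') * toeplitz_cost i)
     + (\<Sum>i\<le>ell. \<Sum>x1\<in>Omega i. snd (rec (ell - i) (\<lambda>j. kf (Suc j)) (\<lambda>y. v (x1 # y))))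
     + (\<Sum>i\<le>ell. \<Sum>j\<in>{i<..ell}. card (Omega i) * card (sparse_grid (ell - j) d'))
     + (\<Sum>i\<le>ell. \<Sum>x1\<in>Omega i. snd (rec (ell - i) (\<lambda>j. kf (Suc j)) 
          (\<lambda>y. \<Sum>j\<in>{i<..ell}. if y \<in> sparse_grid (ell - j) d' then toeplitz_mvm (kf 0) j (\<lambda>s. if s \<in> Omega j then v (s # y) else 0) x1 else 0)))
     + (\<Sum>i\<le>ell. \<Sum>j\<le>i. card (Omega j) * card (sparse_grid (ell - i) d'))
     + (\<Sum>i\<le>ell. card (sparse_grid (ell - i) d') * toeplitz_cost i)
     + (\<Sum>i\<le>ell. card (Omega i) * card (sparse_grid (ell - i) d'))"
  unfolding sg_step_def Let_def snd_conv by (rule refl)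

lemma cost_bound: "\<exists>C::nat. \<forall>m kf v. snd (sg_mvm (Suc e) m kf v) \<le> C * (m+1)^(Suc e) * 2^m"
proof (induction e)
  case 0
  show ?case by (rule exI[of _ 2]) (simp add: toeplitz_cost_def)
next
  case (Suc e)
  then obtain C' where C': "\<And>m kf v. snd (sg_mvm (Suc e) m kf v) \<le> C' * (m+1)^(Suc e) * 2^m" by blast
  define X where "X = (ell::nat) + 1"
  have main: "snd (sg_mvm (Suc (Suc e)) ell kf v) \<le> (14 + 2*C') * (ell+1)^(Suc (Suc e)) * 2^ell" for ell kf v
  proof -
    let ?G = "\<lambda>m. sparse_grid m (Suc e)"
    define X where "X = (ell+1)^(Suc (Suc e)) * (2::nat)^ell"
    have X: "(ell+1) * ((ell+1) * ((ell+1)^e * 2^ell)) = X" unfolding X_def power_Suc by (simp only: mult.assoc)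
    have t1: "(\<Sum>i\<le>ell. card (?G (ell - i)) * toeplitz_cost i) \<le> 4 * X"
    proof -
      have "(\<Sum>i\<le>ell. card (?G (ell - i)) * toeplitz_cost i) \<le> card {..ell} * (4 * ((ell+1) * ((ell+1)^e * 2^ell)))"
      proof (rule sba)
        fix i assume i: "i \<in> {..ell}"
        have "card (?G (ell - i)) * toeplitz_cost i \<le> (2*(ell+1)^e*2^(ell-i)) * ((i+1) * 2^(i+1))"
          unfolding toeplitz_cost_def by (rule mult_right_mono[OF cardG]) simp
        also have "\<dots> = 4 * ((i+1) * ((ell+1)^e * (2^i * 2^(ell-i))))" by (simp add: algebra_simps)
        also have "\<dots> \<le> 4 * ((ell+1) * ((ell+1)^e * 2^ell))"
          using i by (intro mult_le_mono2 mult_le_mono pow2_le) auto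
        finally show "card (?G (ell - i)) * toeplitz_cost i \<le> 4 * ((ell+1) * ((ell+1)^e * 2^ell))" .
      qed
      thus ?thesis by (simp only: conv1 conv2 X)
    qed
    have t2: "(\<Sum>i\<le>ell. \<Sum>x1\<in>Omega i. snd (sg_mvm (Suc e) (ell - i) kf' (w i x1))) \<le> C' * X" for kf' w
    proof -
      have "(\<Sum>i\<le>ell. \<Sum>x1\<in>Omega i. snd (sg_mvm (Suc e) (ell - i) kf' (w i x1))) \<le> card {..ell} * (C' * ((ell+1) * ((ell+1)^e * 2^ell)))"
      proof (rule sba)
        fix i assume i: "i \<in> {..ell}"
        have "(\<Sum>x1\<in>Omega i. snd (sg_mvm (Suc e) (ell - i) kf' (w i x1))) \<le> card (Omega i) * (C' * (ell-i+1)^(Suc e) * 2^(ell-i))"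
          by (rule sba) (rule C')
        also have "\<dots> \<le> 2^i * (C' * (ell+1)^(Suc e) * 2^(ell-i))"
          by (intro mult_mono card_Omega mult_le_mono1 mult_le_mono2 power_mono) auto
        also have "\<dots> = C' * ((ell+1) * ((ell+1)^e * (2^i * 2^(ell-i))))" by (simp only: power_Suc ac_simps)
        also have "\<dots> \<le> C' * ((ell+1) * ((ell+1)^e * 2^ell))"
          using i by (intro mult_le_mono2 pow2_le) auto
        finally show "(\<Sum>x1\<in>Omega i. snd (sg_mvm (Suc e) (ell - i) kf' (w i x1))) \<le> C' * ((ell+1) * ((ell+1)^e * 2^ell))" .
      qed
      thus ?thesis by (simp only: conv1 conv2 X)
    qed
    have t3: "(\<Sum>i\<le>ell. \<Sum>j\<in>{i<..ell}. card (Omega i) * card (?G (ell - j))) \<le> 2 * X"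
    proof -
      have "(\<Sum>i\<le>ell. \<Sum>j\<in>{i<..ell}. card (Omega i) * card (?G (ell - j))) \<le> card {..ell} * ((ell+1) * (2 * ((ell+1)^e * 2^ell)))"
      proof (rule sba)
        fix i assume i: "i \<in> {..ell}"
        have "(\<Sum>j\<in>{i<..ell}. card (Omega i) * card (?G (ell - j))) \<le> card {i<..ell} * (2 * ((ell+1)^e * 2^ell))"
        proof (rule sba)
          fix j assume j: "j \<in> {i<..ell}"
          have "card (Omega i) * card (?G (ell - j)) \<le> 2^i * (2*(ell+1)^e*2^(ell-j))"
            by (intro mult_mono card_Omega cardG) auto
          also have "\<dots> = 2 * ((ell+1)^e * (2^i * 2^(ell-j)))" by (simp add: ac_simps)
          also have "\<dots> \<le> 2 * ((ell+1)^e * 2^ell)"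
            using j by (intro mult_le_mono2 pow2_le) auto
          finally show "card (Omega i) * card (?G (ell - j)) \<le> 2 * ((ell+1)^e * 2^ell)" .
        qed
        also have "\<dots> \<le> (ell+1) * (2 * ((ell+1)^e * 2^ell))"
          by (intro mult_le_mono1) auto
        finally show "(\<Sum>j\<in>{i<..ell}. card (Omega i) * card (?G (ell - j))) \<le> (ell+1) * (2 * ((ell+1)^e * 2^ell))" .
      qed
      thus ?thesis by (simp only: conv1 conv2 X)
    qed
    have t5: "(\<Sum>i\<le>ell. \<Sum>j\<le>i. card (Omega j) * card (?G (ell - i))) \<le> 2 * X"
    proof -
      have "(\<Sum>i\<le>ell. \<Sum>j\<le>i. card (Omega j) * card (?G (ell - i))) \<le> card {..ell} * ((ell+1) * (2 * ((ell+1)^e * 2^ell)))"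
      proof (rule sba)
        fix i assume i: "i \<in> {..ell}"
        have "(\<Sum>j\<le>i. card (Omega j) * card (?G (ell - i))) \<le> card {..i} * (2 * ((ell+1)^e * 2^ell))"
        proof (rule sba)
          fix j assume j: "j \<in> {..i}"
          have "card (Omega j) * card (?G (ell - i)) \<le> 2^j * (2*(ell+1)^e*2^(ell-i))"
            by (intro mult_mono card_Omega cardG) auto
          also have "\<dots> = 2 * ((ell+1)^e * (2^j * 2^(ell-i)))" by (simp add: ac_simps)
          also have "\<dots> \<le> 2 * ((ell+1)^e * 2^ell)"
            using i j by (intro mult_le_mono2 pow2_le) auto
          finally show "card (Omega j) * card (?G (ell - i)) \<le> 2 * ((ell+1)^e * 2^ell)" .
        qed
        also have "\<dots> \<le> (ell+1) * (2 * ((ell+1)^e * 2^ell))"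
          using i by (intro mult_le_mono1) auto
        finally show "(\<Sum>j\<le>i. card (Omega j) * card (?G (ell - i))) \<le> (ell+1) * (2 * ((ell+1)^e * 2^ell))" .
      qed
      thus ?thesis by (simp only: conv1 conv2 X)
    qed
    have t7: "(\<Sum>i\<le>ell. card (Omega i) * card (?G (ell - i))) \<le> 2 * X"
    proof -
      have "(\<Sum>i\<le>ell. card (Omega i) * card (?G (ell - i))) \<le> card {..ell} * (2 * ((ell+1)^e * 2^ell))"
      proof (rule sba)
        fix i assume i: "i \<in> {..ell}"
        have "card (Omega i) * card (?G (ell - i)) \<le> 2^i * (2*(ell+1)^e*2^(ell-i))"
          by (intro mult_mono card_Omega cardG) auto
        also have "\<dots> = 2 * ((ell+1)^e * (2^i * 2^(ell-i)))" by (simp add: ac_simps)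
        also have "\<dots> \<le> 2 * ((ell+1)^e * 2^ell)"
          using i by (intro mult_le_mono2 pow2_le) auto
        finally show "card (Omega i) * card (?G (ell - i)) \<le> 2 * ((ell+1)^e * 2^ell)" .
      qed
      also have "\<dots> \<le> (ell+1) * ((ell+1) * (2 * ((ell+1)^e * 2^ell)))" by simp
      also have "\<dots> = 2 * X" unfolding X[symmetric] by (simp only: ac_simps)
      finally show ?thesis .
    qed
    have "snd (sg_mvm (Suc (Suc e)) ell kf v) = snd (sg_step (sg_mvm (Suc e)) (Suc e) ell kf v)" by simp
    also have "\<dots> \<le> 4*X + C'*X + 2*X + C'*X + 2*X + 4*X + 2*X"
      unfolding snd_sg_step by (intro add_mono t1 t2 t3 t5 t7)
    also have "\<dots> = (14 + 2*C') * (ell+1)^(Suc (Suc e)) * 2^ell" by (simp add: X_def algebra_simps)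
    finally show ?thesis .
  qed
  thus ?case by blast
qed


lemma finite_grid1[simp]: "finite (grid1 m)" unfolding grid1_def by auto

lemma sum_grid1: "sum f (grid1 m) = (\<Sum>j\<le>m. sum f (Omega j))"
  unfolding grid1_def by (rule sum.UNION_disjoint) (auto dest: Omega_disj)

lemma toep_restrict: assumes "j \<le> m"
  shows "toeplitz_mvm k m (\<lambda>s. if s \<in> Omega j then g s else 0) t = (\<Sum>s\<in>Omega j. k (t - s) * g s)"
proof -
  have "toeplitz_mvm k m (\<lambda>s. if s \<in> Omega j then g s else 0) t = (\<Sum>s\<in>grid1 m. if s \<in> Omega j then k (t - s) * g s else 0)"
    unfolding toeplitz_mvm_def by (rule sum.cong) auto
  also have "\<dots> = (\<Sum>s\<in>{s \<in> grid1 m. s \<in> Omega j}. k (t - s) * g s)"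
    by (rule sum.inter_filter[symmetric]) simp
  also have "{s \<in> grid1 m. s \<in> Omega j} = Omega j" using assms unfolding grid1_def by auto
  finally show ?thesis .
qed

lemma prod_kernel_Cons: "length y = length z \<Longrightarrow> prod_kernel kf (a#y) (b#z) = kf 0 (a - b) * prod_kernel (\<lambda>j. kf (Suc j)) y z"
  unfolding prod_kernel_def length_Cons prod.lessThan_Suc_shift by simp

lemma sg_length: "x \<in> sparse_grid m d \<Longrightarrow> length x = d"
  unfolding sparse_grid_def by auto

lemma fst_sg_step: "fst (sg_step rec d' ell kf v) x = (\<Sum>i\<le>ell. if hd x \<in> Omega i then
     fst (rec (ell - i) (\<lambda>j. kf (Suc j)) (\<lambda>y. \<Sum>j\<in>{i<..ell}. if y \<in> sparse_grid (ell - j) d' then toeplitz_mvm (kf 0) j (\<lambda>s. if s \<in> Omega j then v (s # y) else 0) (hd x) else 0)) (tl x)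
   + toeplitz_mvm (kf 0) i (\<lambda>t. \<Sum>j\<le>i. if t \<in> Omega j then fst (rec (ell - j) (\<lambda>j. kf (Suc j)) (\<lambda>y. v (t # y))) (tl x) else 0) (hd x)
   else 0)"
  unfolding sg_step_def Let_def fst_conv by (rule refl)

lemma correct: "\<forall>ell kf v. \<forall>x\<in>sparse_grid ell (Suc e). fst (sg_mvm (Suc e) ell kf v) x = kernel_mvm kf (sparse_grid ell (Suc e)) v x"
proof (induction e)
  case 0
  show ?case
  proof (intro allI ballI)
    fix ell :: nat and kf :: "nat \<Rightarrow> real \<Rightarrow> real" and v :: "real list \<Rightarrow> real" and x
    assume x: "x \<in> sparse_grid ell (Suc 0)"
    then obtain a where a: "x = [a]" using sg_length[OF x] by (cases x) auto
    have "fst (sg_mvm (Suc 0) ell kf v) x = (\<Sum>s\<in>grid1 ell. kf 0 (a - s) * v [s])"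
      using a by (simp add: toeplitz_mvm_def)
    also have "\<dots> = (\<Sum>j\<le>ell. \<Sum>s\<in>Omega j. \<Sum>z\<in>sparse_grid (ell-j) 0. prod_kernel kf x (s#z) * v (s#z))"
      unfolding sum_grid1 using a by (simp add: sparse_grid_0 prod_kernel_def)
    also have "\<dots> = kernel_mvm kf (sparse_grid ell (Suc 0)) v x"
      unfolding kernel_mvm_def sum_sg_Suc ..
    finally show "fst (sg_mvm (Suc 0) ell kf v) x = kernel_mvm kf (sparse_grid ell (Suc 0)) v x" .
  qed
next
  case (Suc e)
  show ?case
  proof (intro allI ballI)
    fix ell :: nat and kf :: "nat \<Rightarrow> real \<Rightarrow> real" and v :: "real list \<Rightarrow> real" and x
    assume x: "x \<in> sparse_grid ell (Suc (Suc e))"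
    let ?G = "\<lambda>m. sparse_grid m (Suc e)"
    define kf' where "kf' = (\<lambda>j. kf (Suc j))"
    have lx: "length x = Suc (Suc e)" using sg_length[OF x] .
    then obtain a y where xy: "x = a # y" by (cases x) auto
    then obtain i where i: "i \<le> ell" "a \<in> Omega i" "y \<in> ?G (ell - i)" using x Cons_in_sg by blast
    have ly: "length y = Suc e" using sg_length[OF i(3)] .
    have IH: "\<And>m w z. z \<in> ?G m \<Longrightarrow> fst (sg_mvm (Suc e) m kf' w) z = (\<Sum>z'\<in>?G m. prod_kernel kf' z z' * w z')"
      using Suc.IH unfolding kernel_mvm_def by blast
    define F where "F = (\<lambda>j. \<Sum>s\<in>Omega j. \<Sum>z\<in>?G (ell-j). kf 0 (a - s) * prod_kernel kf' y z * v (s#z))"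
    define M where "M = (\<lambda>z. \<Sum>j\<in>{i<..ell}. if z \<in> ?G (ell - j) then toeplitz_mvm (kf 0) j (\<lambda>s. if s \<in> Omega j then v (s # z) else 0) a else 0)"
    define N where "N = (\<lambda>t. \<Sum>j\<le>i. if t \<in> Omega j then fst (sg_mvm (Suc e) (ell - j) kf' (\<lambda>z. v (t # z))) y else 0)"
    have cond: "\<And>i'. (a \<in> Omega i') = (i' = i)" using i(2) Omega_disj by blast
    have "fst (sg_mvm (Suc (Suc e)) ell kf v) x = fst (sg_step (sg_mvm (Suc e)) (Suc e) ell kf v) x" by simp
    also have "\<dots> = (\<Sum>i'\<le>ell. if i' = i then fst (sg_mvm (Suc e) (ell - i') kf' (\<lambda>z. \<Sum>j\<in>{i'<..ell}. if z \<in> ?G (ell - j) then toeplitz_mvm (kf 0) j (\<lambda>s. if s \<in> Omega j then v (s # z) else 0) a else 0)) y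
          + toeplitz_mvm (kf 0) i' (\<lambda>t. \<Sum>j\<le>i'. if t \<in> Omega j then fst (sg_mvm (Suc e) (ell - j) kf' (\<lambda>z. v (t # z))) y else 0) a else 0)"
      unfolding fst_sg_step kf'_def[symmetric] xy list.sel cond by (rule refl)
    also have "\<dots> = fst (sg_mvm (Suc e) (ell - i) kf' M) y + toeplitz_mvm (kf 0) i N a"
      using i(1) unfolding M_def N_def by simp
    also have "fst (sg_mvm (Suc e) (ell - i) kf' M) y = (\<Sum>j\<in>{i<..ell}. F j)"
    proof -
      have "fst (sg_mvm (Suc e) (ell - i) kf' M) y = (\<Sum>z\<in>?G (ell-i). prod_kernel kf' y z * M z)"
        by (rule IH[OF i(3)])
      also have "\<dots> = (\<Sum>z\<in>?G (ell-i). \<Sum>j\<in>{i<..ell}. if z \<in> ?G (ell - j) then prod_kernel kf' y z * (\<Sum>s\<in>Omega j. kf 0 (a - s) * v (s # z)) else 0)"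
        unfolding M_def sum_distrib_left
        by (intro sum.cong refl) (auto simp: toep_restrict sum_distrib_left)
      also have "\<dots> = (\<Sum>j\<in>{i<..ell}. \<Sum>z\<in>?G (ell-i). if z \<in> ?G (ell - j) then prod_kernel kf' y z * (\<Sum>s\<in>Omega j. kf 0 (a - s) * v (s # z)) else 0)"
        by (rule sum.swap)
      also have "\<dots> = (\<Sum>j\<in>{i<..ell}. F j)"
      proof (rule sum.cong[OF refl])
        fix j assume j: "j \<in> {i<..ell}"
        have sub: "?G (ell - j) \<subseteq> ?G (ell - i)" using j by (intro sg_mono) auto
        have "(\<Sum>z\<in>?G (ell-i). if z \<in> ?G (ell - j) then prod_kernel kf' y z * (\<Sum>s\<in>Omega j. kf 0 (a - s) * v (s # z)) else 0)
             = (\<Sum>z\<in>{z \<in> ?G (ell-i). z \<in> ?G (ell - j)}. prod_kernel kf' y z * (\<Sum>s\<in>Omega j. kf 0 (a - s) * v (s # z)))"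
          by (rule sum.inter_filter[symmetric]) simp
        also have "{z \<in> ?G (ell-i). z \<in> ?G (ell - j)} = ?G (ell - j)" using sub by blast
        also have "(\<Sum>z\<in>?G (ell-j). prod_kernel kf' y z * (\<Sum>s\<in>Omega j. kf 0 (a - s) * v (s # z)))
            = (\<Sum>z\<in>?G (ell-j). \<Sum>s\<in>Omega j. kf 0 (a - s) * prod_kernel kf' y z * v (s # z))"
          unfolding sum_distrib_left by (intro sum.cong refl) (simp add: ac_simps)
        also have "\<dots> = F j" unfolding F_def by (rule sum.swap)
        finally show "(\<Sum>z\<in>?G (ell-i). if z \<in> ?G (ell - j) then prod_kernel kf' y z * (\<Sum>s\<in>Omega j. kf 0 (a - s) * v (s # z)) else 0) = F j" .
      qed
      finally show ?thesis .
    qed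
    also have "toeplitz_mvm (kf 0) i N a = (\<Sum>j\<le>i. F j)"
    proof -
      have "toeplitz_mvm (kf 0) i N a = (\<Sum>t\<in>grid1 i. \<Sum>j\<le>i. kf 0 (a - t) * (if t \<in> Omega j then fst (sg_mvm (Suc e) (ell - j) kf' (\<lambda>z. v (t # z))) y else 0))"
        unfolding toeplitz_mvm_def N_def sum_distrib_left ..
      also have "\<dots> = (\<Sum>j\<le>i. \<Sum>t\<in>grid1 i. kf 0 (a - t) * (if t \<in> Omega j then fst (sg_mvm (Suc e) (ell - j) kf' (\<lambda>z. v (t # z))) y else 0))"
        by (rule sum.swap)
      also have "\<dots> = (\<Sum>j\<le>i. F j)"
      proof (rule sum.cong[OF refl])
        fix j assume j: "j \<in> {..i}"
        have yj: "y \<in> ?G (ell - j)" using i(3) j by (meson atMost_iff diff_le_mono2 sg_mono subsetD)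
        have "(\<Sum>t\<in>grid1 i. kf 0 (a - t) * (if t \<in> Omega j then fst (sg_mvm (Suc e) (ell - j) kf' (\<lambda>z. v (t # z))) y else 0))
            = (\<Sum>t\<in>Omega j. kf 0 (a - t) * fst (sg_mvm (Suc e) (ell - j) kf' (\<lambda>z. v (t # z))) y)"
          using toep_restrict[of j i "kf 0" "\<lambda>t. fst (sg_mvm (Suc e) (ell - j) kf' (\<lambda>z. v (t # z))) y" a] j
          unfolding toeplitz_mvm_def by simp
        also have "\<dots> = F j" unfolding F_def IH[OF yj] sum_distrib_left
          by (intro sum.cong refl) (simp add: ac_simps)
        finally show "(\<Sum>t\<in>grid1 i. kf 0 (a - t) * (if t \<in> Omega j then fst (sg_mvm (Suc e) (ell - j) kf' (\<lambda>z. v (t # z))) y else 0)) = F j" .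
      qed
      finally show ?thesis .
    qed
    also have "(\<Sum>j\<in>{i<..ell}. F j) + (\<Sum>j\<le>i. F j) = (\<Sum>j\<le>ell. F j)"
    proof -
      have "{..ell} = {..i} \<union> {i<..ell}" using i(1) by auto
      moreover have "sum F ({..i} \<union> {i<..ell}) = sum F {..i} + sum F {i<..ell}"
        by (rule sum.union_disjoint) auto
      ultimately show ?thesis by simp
    qed
    also have "\<dots> = kernel_mvm kf (sparse_grid ell (Suc (Suc e))) v x"
      unfolding kernel_mvm_def sum_sg_Suc F_def xy
      by (intro sum.cong refl) (simp add: prod_kernel_Cons ly sg_length kf'_def)
    finally show "fst (sg_mvm (Suc (Suc e)) ell kf v) x = kernel_mvm kf (sparse_grid ell (Suc (Suc e))) v x" .
  qed
qed


theorem theorem1: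
  fixes d :: nat
  assumes "d \<ge> 1"
  shows "(\<forall>ell kf v. \<forall>x\<in>sparse_grid ell d.
            fst (sg_mvm d ell kf v) x = kernel_mvm kf (sparse_grid ell d) v x)
       \<and> (\<exists>C::real. \<forall>ell\<ge>1. \<forall>kf v.
            real (snd (sg_mvm d ell kf v)) \<le> C * real ell ^ d * 2 ^ ell)"
proof -
  obtain e where d: "d = Suc e" using assms by (cases d) auto
  obtain C :: nat where C: "\<And>m kf v. snd (sg_mvm (Suc e) m kf v) \<le> C * (m+1)^(Suc e) * 2^m"
    using cost_bound by blast
  have "real (snd (sg_mvm d ell kf v)) \<le> (real C * 2^d) * real ell ^ d * 2 ^ ell" if ell: "ell \<ge> 1" for ell kf v
  proof -
    have "real (snd (sg_mvm d ell kf v)) \<le> real (C * (ell+1)^d * 2^ell)"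
      using C[of ell kf v] d by (simp only: of_nat_le_iff)
    also have "\<dots> = real C * (real ell + 1)^d * 2^ell" by (simp add: add.commute)
    also have "\<dots> \<le> real C * (2 * real ell)^d * 2^ell"
      using ell by (intro mult_right_mono mult_left_mono power_mono) auto
    also have "\<dots> = (real C * 2^d) * real ell ^ d * 2 ^ ell" by (simp add: power_mult_distrib)
    finally show ?thesis .
  qed
  thus ?thesis using correct[of e] d by blast
qed

end
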